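(* Let $d\ge 2$ and let $\mathcal U,\mathcal H$ be as defined in the context. Then $\operatorname{rs}(\mathcal U,\mathcal H)\le 2^{d-1}$.
   Context: Let $d\ge 2$. Define $\mathcal U=\{(x_1,\dots,x_d): x_1,\dots,x_{d-1}\in\{-1,1\},\ x_d\in\{-(d-1),\dots,d-1\}\}$ (integers) and $\mathcal H=\{\{x\in\mathbb R^d:\sum_{i=1}^d a_ix_i=0\}: a_1,\dots,a_{d-1}\in\{0,1\},\ a_d=-1\}$. $\operatorname{rs}(\mathcal U,\mathcal H)=\max_{S}\,|\{p\in\mathcal U: p\in S\}|\cdot|\{h\in\mathcal H: S\subseteq h\}|$, the maximum over all affine subspaces $S\subseteq\mathbb R^d$. *)

theory Defs
  imports "HOL-Analysis.Analysis"
begin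

text \<open>Points of R^d are vectors of type real^'n with d = CARD('n); the index type
  is linearly ordered so that the "last" coordinate x_d is the one at the maximal index.\<close>

definition last_idx :: "'n::{finite,linorder}" where
  "last_idx = Max (UNIV :: 'n set)"

definition U_pts :: "(real^'n::{finite,linorder}) set" where
  "U_pts = {x. (\<forall>i. i \<noteq> last_idx \<longrightarrow> x$i \<in> {-1, 1}) \<and>
               x$last_idx \<in> real_of_int ` {-(int CARD('n) - 1) .. int CARD('n) - 1}}"

definition H_planes :: "(real^'n::{finite,linorder}) set set" where
  "H_planes = {{x. (\<Sum>i\<in>UNIV. a i * x$i) = 0} | a.
                  a last_idx = -1 \<and> (\<forall>i. i \<noteq> last_idx \<longrightarrow> a i \<in> {0, 1})}"

definition rs :: "'a::real_vector set \<Rightarrow> 'a set set \<Rightarrow> nat" where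
  "rs U H = Max {card (U \<inter> S) * card {h \<in> H. S \<subseteq> h} | S. affine S}"

end

theory Submission
  imports Defs
begin

lemma fin_funs:
  assumes "finite (B::'b set)"
  shows "finite {f::'i::finite\<Rightarrow>'b. \<forall>x. f x \<in> B}"
proof -
  have "finite {f::'i\<Rightarrow>'b. \<forall>x. (x \<in> UNIV \<longrightarrow> f x \<in> B) \<and> (x \<notin> UNIV \<longrightarrow> f x = undefined)}"
    by (rule finite_set_of_finite_funs) (use assms in auto)
  then show ?thesis by simp
qed

lemma key:
  fixes P A :: "('i::finite \<Rightarrow> real) set" and I :: "'i set"
  assumes ab: "\<alpha> \<noteq> \<beta>" and gd: "\<gamma> \<noteq> \<delta>"
  shows "finite I \<Longrightarrow> (\<forall>p\<in>P. \<forall>i. (i\<in>I \<longrightarrow> p i \<in> {\<alpha>,\<beta>}) \<and> (i\<notin>I \<longrightarrow> p i = 0)) \<Longrightarrow>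
    (\<forall>a\<in>A. \<forall>i. (i\<in>I \<longrightarrow> a i \<in> {\<gamma>,\<delta>}) \<and> (i\<notin>I \<longrightarrow> a i = 0)) \<Longrightarrow>
    (\<forall>p\<in>P. \<forall>q\<in>P. \<forall>a\<in>A. \<forall>b\<in>A. (\<Sum>i\<in>I. (a i - b i) * (p i - q i)) = 0) \<Longrightarrow>
    card P * card A \<le> 2 ^ card I"
proof (induction I arbitrary: P A rule: finite_induct)
  case empty
  have "P \<subseteq> {\<lambda>_. 0}" using empty(1) by auto
  hence "card P \<le> 1" by (metis card.empty card.insert card_mono empty_iff finite.intros(1,2) One_nat_def)
  moreover have "A \<subseteq> {\<lambda>_. 0}" using empty(2) by auto
  hence "card A \<le> 1" by (metis card.empty card.insert card_mono empty_iff finite.intros(1,2) One_nat_def)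
  ultimately show ?case using mult_le_mono[of "card P" 1 "card A" 1] by simp
next
  case (insert j I)
  note hP = "insert.prems"(1) and hA = "insert.prems"(2) and orth = "insert.prems"(3)
  define \<pi> where "\<pi> = (\<lambda>f::'i\<Rightarrow>real. f(j := 0))"
  have finP: "finite P"
    by (rule finite_subset[OF _ fin_funs[of "{\<alpha>,\<beta>,0}"]]) (use hP in fastforce)+
  have finA: "finite A"
    by (rule finite_subset[OF _ fin_funs[of "{\<gamma>,\<delta>,0}"]]) (use hA in fastforce)+
  have C: "card Q * card B \<le> 2 ^ card I"
    if QP: "Q \<subseteq> P" and BA: "B \<subseteq> A" and Bc: "\<forall>a\<in>B. a j = c" and inj: "inj_on \<pi> Q" for Q B c
  proof -
    have injB: "inj_on \<pi> B"
    proof (rule inj_onI)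
      fix a b assume "a \<in> B" "b \<in> B" "\<pi> a = \<pi> b"
      then show "a = b" using Bc unfolding \<pi>_def by (metis fun_upd_triv fun_upd_upd)
    qed
    have "card (\<pi> ` Q) * card (\<pi> ` B) \<le> 2 ^ card I"
    proof (rule "insert.IH")
      show "\<forall>p\<in>\<pi> ` Q. \<forall>i. (i \<in> I \<longrightarrow> p i \<in> {\<alpha>, \<beta>}) \<and> (i \<notin> I \<longrightarrow> p i = 0)"
        using hP QP "insert.hyps"(2) unfolding \<pi>_def by fastforce
      show "\<forall>a\<in>\<pi> ` B. \<forall>i. (i \<in> I \<longrightarrow> a i \<in> {\<gamma>, \<delta>}) \<and> (i \<notin> I \<longrightarrow> a i = 0)"
        using hA BA "insert.hyps"(2) unfolding \<pi>_def by fastforce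
      show "\<forall>p\<in>\<pi> ` Q. \<forall>q\<in>\<pi> ` Q. \<forall>a\<in>\<pi> ` B. \<forall>b\<in>\<pi> ` B. (\<Sum>i\<in>I. (a i - b i) * (p i - q i)) = 0"
      proof (intro ballI)
        fix p q a b assume "p \<in> \<pi> ` Q" "q \<in> \<pi> ` Q" "a \<in> \<pi> ` B" "b \<in> \<pi> ` B"
        then obtain p' q' a' b' where pr: "p' \<in> Q" "q' \<in> Q" "a' \<in> B" "b' \<in> B"
          and eq: "p = \<pi> p'" "q = \<pi> q'" "a = \<pi> a'" "b = \<pi> b'" by blast
        have "(\<Sum>i\<in>I. (a i - b i) * (p i - q i)) = (\<Sum>i\<in>I. (a' i - b' i) * (p' i - q' i))"
          using "insert.hyps"(2) unfolding eq \<pi>_def by (intro sum.cong) auto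
        also have "\<dots> = (a' j - b' j) * (p' j - q' j) + (\<Sum>i\<in>I. (a' i - b' i) * (p' i - q' i))"
          using Bc pr by (simp add: bspec[OF Bc])
        also have "\<dots> = 0"
          using orth pr QP BA "insert.hyps" by (simp add: subset_iff)
        finally show "(\<Sum>i\<in>I. (a i - b i) * (p i - q i)) = 0" .
      qed
    qed
    then show ?thesis using inj injB by (simp add: card_image)
  qed
  define P0 where "P0 = {p\<in>P. p j = \<alpha>}"
  define P1 where "P1 = {p\<in>P. p j = \<beta>}"
  define A0 where "A0 = {a\<in>A. a j = \<gamma>}"
  define A1 where "A1 = {a\<in>A. a j = \<delta>}"
  have Pu: "P = P0 \<union> P1" using hP unfolding P0_def P1_def by auto
  have Au: "A = A0 \<union> A1" using hA unfolding A0_def A1_def by auto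
  have cP: "card P = card P0 + card P1"
    unfolding Pu by (rule card_Un_disjoint) (use finP ab in \<open>auto simp: P0_def P1_def\<close>)
  have cA: "card A = card A0 + card A1"
    unfolding Au by (rule card_Un_disjoint) (use finA gd in \<open>auto simp: A0_def A1_def\<close>)
  have injc: "inj_on \<pi> Q" if "\<forall>p\<in>Q. p j = c" for Q c
  proof (rule inj_onI)
    fix a b assume "a \<in> Q" "b \<in> Q" "\<pi> a = \<pi> b"
    then show "a = b" using that unfolding \<pi>_def by (metis fun_upd_triv fun_upd_upd)
  qed
  have cardI: "card (insert j I) = Suc (card I)" using "insert.hyps" by simp
  show ?case
  proof (cases "A0 = {} \<or> A1 = {}")
    case True
    then obtain c where Ac: "\<forall>a\<in>A. a j = c" using Au unfolding A0_def A1_def by blast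
    have "card P0 * card A \<le> 2 ^ card I"
      by (rule C[OF _ _ Ac injc[of _ \<alpha>]]) (auto simp: P0_def)
    moreover have "card P1 * card A \<le> 2 ^ card I"
      by (rule C[OF _ _ Ac injc[of _ \<beta>]]) (auto simp: P1_def)
    ultimately show ?thesis using cP cardI by (simp add: add_mult_distrib)
  next
    case False
    then obtain a0 b0 where a0: "a0 \<in> A0" and b0: "b0 \<in> A1" by blast
    have injP: "inj_on \<pi> P"
    proof (rule inj_onI)
      fix p q assume pq: "p \<in> P" "q \<in> P" "\<pi> p = \<pi> q"
      show "p = q"
      proof (cases "p j = q j")
        case True
        then show ?thesis using pq unfolding \<pi>_def by (metis fun_upd_triv fun_upd_upd)
      next
        case False
        have eqI: "\<forall>i\<in>I. p i = q i" using pq(3) "insert.hyps"(2) unfolding \<pi>_def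
          by (metis fun_upd_other)
        have "(\<Sum>i\<in>insert j I. (a0 i - b0 i) * (p i - q i)) = 0"
          using orth pq a0 b0 by (auto simp: A0_def A1_def)
        moreover have "(\<Sum>i\<in>insert j I. (a0 i - b0 i) * (p i - q i)) = (a0 j - b0 j) * (p j - q j)"
          using "insert.hyps" eqI by simp
        moreover have "(a0 j - b0 j) * (p j - q j) \<noteq> 0"
          using False gd a0 b0 by (simp add: A0_def A1_def)
        ultimately show ?thesis by simp
      qed
    qed
    have "card P * card A0 \<le> 2 ^ card I"
      by (rule C[OF _ _ _ injP, of _ \<gamma>]) (auto simp: A0_def)
    moreover have "card P * card A1 \<le> 2 ^ card I"
      by (rule C[OF _ _ _ injP, of _ \<delta>]) (auto simp: A1_def)
    ultimately show ?thesis using cA cardI by (simp add: add_mult_distrib2)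
  qed
qed

lemma bound:
  fixes S :: "(real^'n::{finite,linorder}) set"
  shows "card (U_pts \<inter> S) * card {h \<in> H_planes. S \<subseteq> h} \<le> 2 ^ (CARD('n) - 1)"
proof -
  define L where "L = (last_idx :: 'n)"
  define I where "I = UNIV - {L}"
  define pl where "pl = (\<lambda>a::'n\<Rightarrow>real. {x::(real,'n) vec. (\<Sum>i\<in>UNIV. a i * x$i) = 0})"
  define C where "C = {a. a L = -1 \<and> (\<forall>i. i \<noteq> L \<longrightarrow> a i \<in> {0,1}) \<and> S \<subseteq> pl a}"
  define fa where "fa = (\<lambda>a::'n\<Rightarrow>real. a(L := 0))"
  define fp where "fp = (\<lambda>x::(real,'n) vec. \<lambda>i. if i = L then 0 else x$i)"
  have cI: "card I = CARD('n) - 1" unfolding I_def by (simp add: card_Diff_singleton)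
  have finC: "finite C"
    by (rule finite_subset[OF _ fin_funs[of "{-1,0,1}"]]) (auto simp: C_def)
  have Hs: "{h \<in> H_planes. S \<subseteq> h} \<subseteq> pl ` C"
    unfolding H_planes_def C_def pl_def L_def by auto
  have cH: "card {h \<in> H_planes. S \<subseteq> h} \<le> card C"
    by (metis (no_types, lifting) Hs card_image_le card_mono finC finite_imageI le_trans)
  have injfa: "inj_on fa C"
  proof (rule inj_onI)
    fix a b assume ab: "a \<in> C" "b \<in> C" "fa a = fa b"
    have "a i = b i" for i
    proof (cases "i = L")
      case True then show ?thesis using ab(1,2) by (simp add: C_def)
    next
      case False then show ?thesis using fun_cong[OF ab(3), of i] by (simp add: fa_def)
    qed
    then show "a = b" by (simp add: fun_eq_iff)
  qed
  have splitsum: "(\<Sum>i\<in>I. a i * x$i) = x$L" if "a \<in> C" "x \<in> S" for a x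
  proof -
    have "(\<Sum>i\<in>UNIV. a i * x$i) = 0" using that unfolding C_def pl_def by auto
    moreover have "(\<Sum>i\<in>UNIV. a i * x$i) = a L * x$L + (\<Sum>i\<in>I. a i * x$i)"
      unfolding I_def by (rule sum.remove) auto
    moreover have "a L = -1" using that unfolding C_def by auto
    ultimately show ?thesis by simp
  qed
  show ?thesis
  proof (cases "C = {}")
    case True
    then show ?thesis using cH by simp
  next
    case False
    then obtain a0 where a0: "a0 \<in> C" by blast
    have injfp: "inj_on fp (U_pts \<inter> S)"
    proof (rule inj_onI)
      fix x y assume xy: "x \<in> U_pts \<inter> S" "y \<in> U_pts \<inter> S" "fp x = fp y"
      have eqI: "\<forall>i\<in>I. x$i = y$i" using xy(3) unfolding fp_def I_def by (metis DiffE singletonI)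
      have "x$L = y$L"
      proof -
        have "x$L = (\<Sum>i\<in>I. a0 i * x$i)" using splitsum[OF a0] xy(1) by simp
        also have "\<dots> = (\<Sum>i\<in>I. a0 i * y$i)" using eqI by (intro sum.cong) auto
        also have "\<dots> = y$L" using splitsum[OF a0] xy(2) by simp
        finally show ?thesis .
      qed
      then show "x = y" using eqI unfolding vec_eq_iff I_def by blast
    qed
    have "card (fp ` (U_pts \<inter> S)) * card (fa ` C) \<le> 2 ^ card I"
    proof (rule key[of "-1" 1 0 1])
      show "\<forall>p\<in>fp ` (U_pts \<inter> S). \<forall>i. (i \<in> I \<longrightarrow> p i \<in> {- 1, 1}) \<and> (i \<notin> I \<longrightarrow> p i = 0)"
        unfolding fp_def I_def U_pts_def L_def by auto
      show "\<forall>a\<in>fa ` C. \<forall>i. (i \<in> I \<longrightarrow> a i \<in> {0, 1}) \<and> (i \<notin> I \<longrightarrow> a i = 0)"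
        unfolding fa_def I_def C_def by auto
      show "\<forall>p\<in>fp ` (U_pts \<inter> S). \<forall>q\<in>fp ` (U_pts \<inter> S). \<forall>a\<in>fa ` C. \<forall>b\<in>fa ` C.
          (\<Sum>i\<in>I. (a i - b i) * (p i - q i)) = 0"
      proof (intro ballI)
        fix p q a b assume "p \<in> fp ` (U_pts \<inter> S)" "q \<in> fp ` (U_pts \<inter> S)" "a \<in> fa ` C" "b \<in> fa ` C"
        then obtain x y a' b' where pr: "x \<in> S" "y \<in> S" "a' \<in> C" "b' \<in> C"
          and eq: "p = fp x" "q = fp y" "a = fa a'" "b = fa b'" by blast
        have "(\<Sum>i\<in>I. (a i - b i) * (p i - q i)) =
           (\<Sum>i\<in>I. a' i * x$i - b' i * x$i - (a' i * y$i - b' i * y$i))"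
          unfolding eq fa_def fp_def I_def by (intro sum.cong) (auto simp: algebra_simps)
        also have "\<dots> = (\<Sum>i\<in>I. a' i * x$i) - (\<Sum>i\<in>I. b' i * x$i) - ((\<Sum>i\<in>I. a' i * y$i) - (\<Sum>i\<in>I. b' i * y$i))"
          by (simp add: sum_subtractf)
        also have "\<dots> = 0" using splitsum pr by simp
        finally show "(\<Sum>i\<in>I. (a i - b i) * (p i - q i)) = 0" .
      qed
    qed simp_all
    then have "card (U_pts \<inter> S) * card C \<le> 2 ^ (CARD('n) - 1)"
      using injfp injfa cI by (simp add: card_image)
    then show ?thesis using cH by (meson le_trans mult_le_mono2)
  qed
qed

theorem mainTheorem7:
  assumes "CARD('n) \<ge> 2"
  shows "rs (U_pts :: (real^'n::{finite,linorder}) set) H_planes \<le> 2 ^ (CARD('n) - 1)"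
proof -
  let ?M = "{card (U_pts \<inter> S) * card {h \<in> (H_planes :: (real,'n) vec set set). S \<subseteq> h} | S. affine S}"
  have sub: "?M \<subseteq> {..2 ^ (CARD('n) - 1)}" using bound by auto
  have fin: "finite ?M" by (rule finite_subset[OF sub]) simp
  have ne: "?M \<noteq> {}" using affine_UNIV by blast
  show ?thesis unfolding rs_def using Max_le_iff[OF fin ne] sub by auto
qed

end
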